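(* Let $v$ and $v'$ be distinct true twin vertices of a graph $G$ and let $G'=G-v'$. Then $\tilde\gamma_{gr}^{\times 2}(G')\le\tilde\gamma_{gr}^{\times 2}(G)\le\tilde\gamma_{gr}^{\times 2}(G')+1$. Moreover, $\tilde\gamma_{gr}^{\times 2}(G)=\tilde\gamma_{gr}^{\times 2}(G')+1$ if and only if there exists an MDNS $S'$ of $G'$ such that $v\in\widehat{S'}$, $N_{S'}^1[v]\neq\emptyset$, and $N_{S'}[x]\setminus N_{S'}^1[v]\neq\emptyset$ for every $x\in\widehat{S'}\setminus\{v\}$.
   Context: Graphs are finite, simple, undirected; $N[v]$ is the closed neighborhood; $v,v'$ are true twins if $N[v]=N[v']$. A sequence $S=(v_1,\dots,v_k)$ of distinct vertices is a double neighborhood sequence (DNS) if for each $i$ some $u\in N[v_i]$ satisfies $|\{j<i: u\in N[v_j]\}|\le 1$. An MDNS is a DNS of maximum length; $\tilde\gamma_{gr}^{\times 2}(G)$ is that length. $\widehat S$ is the set of vertices of $S$. For a DNS $S=(v_1,\dots,v_k)$: $N_S^1[v_i]=N[v_i]\setminus\bigcup_{j<i}N[v_j]$; $N_S^2[v_i]=\{w\in N[v_i]: |\{j<i: w\in N[v_j]\}|=1\}$; $N_S[v_i]=N_S^1[v_i]\cup N_S^2[v_i]$. *)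

theory Defs
  imports Main
begin

text \<open>Only edges between vertices of V matter, so the
 vertex-deleted subgraph G - v' is simply (V - {v'}, E).\<close>

definition simple_graph :: "'a set \<Rightarrow> ('a \<Rightarrow> 'a \<Rightarrow> bool) \<Rightarrow> bool" where
  "simple_graph V E \<longleftrightarrow> finite V \<and> (\<forall>x\<in>V. \<forall>y\<in>V. E x y \<longleftrightarrow> E y x) \<and> (\<forall>x\<in>V. \<not> E x x)"

definition closed_nbh :: "'a set \<Rightarrow> ('a \<Rightarrow> 'a \<Rightarrow> bool) \<Rightarrow> 'a \<Rightarrow> 'a set" where
  "closed_nbh V E v = {u \<in> V. u = v \<or> E v u}"

definition true_twins :: "'a set \<Rightarrow> ('a \<Rightarrow> 'a \<Rightarrow> bool) \<Rightarrow> 'a \<Rightarrow> 'a \<Rightarrow> bool" where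
  "true_twins V E v v' \<longleftrightarrow> v \<in> V \<and> v' \<in> V \<and> closed_nbh V E v = closed_nbh V E v'"

definition dom_count :: "'a set \<Rightarrow> ('a \<Rightarrow> 'a \<Rightarrow> bool) \<Rightarrow> 'a list \<Rightarrow> nat \<Rightarrow> 'a \<Rightarrow> nat" where
  "dom_count V E S i u = card {j. j < i \<and> u \<in> closed_nbh V E (S ! j)}"

definition is_dns :: "'a set \<Rightarrow> ('a \<Rightarrow> 'a \<Rightarrow> bool) \<Rightarrow> 'a list \<Rightarrow> bool" where
  "is_dns V E S \<longleftrightarrow> distinct S \<and> set S \<subseteq> V \<and>
     (\<forall>i < length S. \<exists>u \<in> closed_nbh V E (S ! i). dom_count V E S i u \<le> 1)"

definition gamma_gr2 :: "'a set \<Rightarrow> ('a \<Rightarrow> 'a \<Rightarrow> bool) \<Rightarrow> nat" where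
  "gamma_gr2 V E = Max (length ` {S. is_dns V E S})"

definition is_mdns :: "'a set \<Rightarrow> ('a \<Rightarrow> 'a \<Rightarrow> bool) \<Rightarrow> 'a list \<Rightarrow> bool" where
  "is_mdns V E S \<longleftrightarrow> is_dns V E S \<and> (\<forall>T. is_dns V E T \<longrightarrow> length T \<le> length S)"

text \<open>N^1_S[v_i], N^2_S[v_i], N_S[v_i] for the i-th (0-based) entry of S.\<close>
definition NS1 :: "'a set \<Rightarrow> ('a \<Rightarrow> 'a \<Rightarrow> bool) \<Rightarrow> 'a list \<Rightarrow> nat \<Rightarrow> 'a set" where
  "NS1 V E S i = closed_nbh V E (S ! i) - (\<Union>j<i. closed_nbh V E (S ! j))"

definition NS2 :: "'a set \<Rightarrow> ('a \<Rightarrow> 'a \<Rightarrow> bool) \<Rightarrow> 'a list \<Rightarrow> nat \<Rightarrow> 'a set" where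
  "NS2 V E S i = {w \<in> closed_nbh V E (S ! i). dom_count V E S i w = 1}"

definition NS :: "'a set \<Rightarrow> ('a \<Rightarrow> 'a \<Rightarrow> bool) \<Rightarrow> 'a list \<Rightarrow> nat \<Rightarrow> 'a set" where
  "NS V E S i = NS1 V E S i \<union> NS2 V E S i"

end

theory Submission
  imports Defs
begin


lemma dns_fin: "finite V \<Longrightarrow> finite {S. is_dns V E S}"
proof -
  assume f: "finite V"
  have "{S. is_dns V E S} \<subseteq> {xs. set xs \<subseteq> V \<and> length xs \<le> card V}"
    by (auto simp: is_dns_def dest: distinct_card intro!: card_mono[OF f] elim!: subst[where P="\<lambda>x. x \<le> card V", OF distinct_card]) 
  then show ?thesis using finite_lists_length_le[OF f] by (rule finite_subset)
qed

lemma gamma_ge: "finite V \<Longrightarrow> is_dns V E S \<Longrightarrow> length S \<le> gamma_gr2 V E"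
  unfolding gamma_gr2_def by (rule Max_ge) (auto simp: dns_fin)

lemma nil_dns: "is_dns V E []" by (simp add: is_dns_def)

lemma gamma_ex: "finite V \<Longrightarrow> \<exists>S. is_dns V E S \<and> length S = gamma_gr2 V E"
proof -
  assume f: "finite V"
  have "gamma_gr2 V E \<in> length ` {S. is_dns V E S}"
    unfolding gamma_gr2_def by (rule Max_in) (use nil_dns dns_fin[OF f] in auto)
  then show ?thesis by auto
qed

lemma mdns_gamma: "finite V \<Longrightarrow> is_mdns V E S \<Longrightarrow> gamma_gr2 V E = length S"
  by (metis gamma_ex gamma_ge is_mdns_def le_antisym)

lemma dc_le:
  assumes "inj_on g {j. j < i \<and> u \<in> closed_nbh V E (A!j)}"
    and "\<And>j. j < i \<Longrightarrow> u \<in> closed_nbh V E (A!j) \<Longrightarrow> g j < i' \<and> u' \<in> closed_nbh V' E' (B!(g j))"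
  shows "dom_count V E A i u \<le> dom_count V' E' B i' u'"
  unfolding dom_count_def
  by (rule card_inj_on_le[OF assms(1)]) (use assms(2) in auto)

lemma dc_ge2:
  assumes "a < i" "b < i" "a \<noteq> b" "u \<in> closed_nbh V E (S!a)" "u \<in> closed_nbh V E (S!b)"
  shows "2 \<le> dom_count V E S i u"
proof -
  have "card {a,b} \<le> dom_count V E S i u"
    unfolding dom_count_def by (rule card_mono) (use assms in auto)
  then show ?thesis using assms(3) by simp
qed

lemma NS1_iff: "w \<in> NS1 V E S i \<longleftrightarrow> w \<in> closed_nbh V E (S!i) \<and> (\<forall>j<i. w \<notin> closed_nbh V E (S!j))"
  by (auto simp: NS1_def)

lemma dc0: "dom_count V E S i w = 0 \<longleftrightarrow> (\<forall>j<i. w \<notin> closed_nbh V E (S!j))"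
  unfolding dom_count_def by (subst card_0_eq) auto

lemma NS_iff: "w \<in> NS V E S i \<longleftrightarrow> w \<in> closed_nbh V E (S!i) \<and> dom_count V E S i w \<le> 1"
proof -
  have "w \<in> NS1 V E S i \<longleftrightarrow> w \<in> closed_nbh V E (S!i) \<and> dom_count V E S i w = 0"
    using NS1_iff dc0 by metis
  then show ?thesis unfolding NS_def NS2_def by auto
qed

lemma embed_dns:
  assumes S: "is_dns V E S" and T: "distinct T" "set T \<subseteq> V"
    and mono: "\<And>j j'. j < j' \<Longrightarrow> j' < length T \<Longrightarrow> g j < g j'"
    and nb: "\<And>j. j < length T \<Longrightarrow> g j < length S \<and> closed_nbh V E (T!j) = closed_nbh V E (S!(g j))"
  shows "is_dns V E T"
  unfolding is_dns_def
proof (intro conjI T allI impI)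
  fix i assume i: "i < length T"
  then obtain u where u: "u \<in> closed_nbh V E (S!(g i))" "dom_count V E S (g i) u \<le> 1"
    using S nb unfolding is_dns_def by blast
  have "dom_count V E T i u \<le> dom_count V E S (g i) u"
  proof (rule dc_le)
    show "inj_on g {j. j < i \<and> u \<in> closed_nbh V E (T ! j)}"
      unfolding inj_on_def using mono i
      by (metis (no_types, lifting) dual_order.strict_trans linorder_neqE_nat mem_Collect_eq nat_less_le)
  next
    fix j assume "j < i" "u \<in> closed_nbh V E (T ! j)"
    then show "g j < g i \<and> u \<in> closed_nbh V E (S ! g j)" using mono[of j i] nb[of j] i by auto
  qed
  then show "\<exists>u\<in>closed_nbh V E (T ! i). dom_count V E T i u \<le> 1"
    using u nb[OF i] by (metis order.trans)
qed



locale twin =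
  fixes V :: "'a set" and E :: "'a \<Rightarrow> 'a \<Rightarrow> bool" and v v' :: 'a
  assumes sg: "simple_graph V E" and tw: "true_twins V E v v'" and ne: "v \<noteq> v'"
begin

abbreviation "N \<equiv> closed_nbh V E"
abbreviation "V' \<equiv> V - {v'}"
abbreviation "N' \<equiv> closed_nbh V' E"
definition hh :: "'a \<Rightarrow> 'a" where "hh x = (if x = v' then v else x)"

lemma finV: "finite V" using sg by (simp add: simple_graph_def)
lemma finV': "finite V'" using finV by simp
lemma vV: "v \<in> V" and v'V: "v' \<in> V" using tw by (auto simp: true_twins_def)
lemma F1: "u \<in> N' x \<longleftrightarrow> u \<noteq> v' \<and> u \<in> N x" by (auto simp: closed_nbh_def)
lemma F2: "N v = N v'" using tw by (simp add: true_twins_def)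
lemma NsubV: "u \<in> N x \<Longrightarrow> u \<in> V" by (simp add: closed_nbh_def)
lemma F3: assumes "x \<in> V" shows "v \<in> N x \<longleftrightarrow> v' \<in> N x"
proof -
  have "v \<in> N x \<longleftrightarrow> x \<in> N v" using assms vV sg by (auto simp: closed_nbh_def simple_graph_def)
  also have "\<dots> \<longleftrightarrow> x \<in> N v'" using F2 by simp
  also have "\<dots> \<longleftrightarrow> v' \<in> N x" using assms v'V sg by (auto simp: closed_nbh_def simple_graph_def)
  finally show ?thesis .
qed
lemma F4: "N (hh x) = N x" using F2 by (simp add: hh_def)
lemma F5: "y \<in> V \<Longrightarrow> hh x \<in> N y \<longleftrightarrow> x \<in> N y" using F3 by (simp add: hh_def)
lemma hhV: "x \<in> V \<Longrightarrow> hh x \<in> V'" using vV ne by (simp add: hh_def)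
lemma hh_ne: "hh x \<noteq> v'" using ne by (simp add: hh_def)

lemma L1: assumes "is_dns V' E S" shows "is_dns V E S"
  unfolding is_dns_def
proof (intro conjI allI impI)
  show "distinct S" "set S \<subseteq> V" using assms by (auto simp: is_dns_def)
  fix i assume i: "i < length S"
  then obtain u where u: "u \<in> N' (S!i)" "dom_count V' E S i u \<le> 1" using assms by (auto simp: is_dns_def)
  have "dom_count V E S i u = dom_count V' E S i u"
    unfolding dom_count_def using u(1) F1 by metis
  then show "\<exists>u\<in>N (S ! i). dom_count V E S i u \<le> 1" using u F1 by (metis order.refl)
qed

lemma L2: assumes "is_dns V E S" "v' \<notin> set S" shows "is_dns V' E S"
  unfolding is_dns_def
proof (intro conjI allI impI)
  show "distinct S" "set S \<subseteq> V'" using assms by (auto simp: is_dns_def)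
  fix i assume i: "i < length S"
  then obtain u where u: "u \<in> N (S!i)" "dom_count V E S i u \<le> 1" using assms by (auto simp: is_dns_def)
  have SV: "\<And>j. j < length S \<Longrightarrow> S!j \<in> V" using assms(1) by (auto simp: is_dns_def)
  have "dom_count V' E S i (hh u) \<le> dom_count V E S i u"
    by (rule dc_le[where g=id]) (use i SV F1 F5 hh_ne in auto)
  moreover have "hh u \<in> N' (S!i)" using F1 F5 hh_ne SV[OF i] u by auto
  ultimately show "\<exists>u\<in>N' (S ! i). dom_count V' E S i u \<le> 1" using u by (metis order.trans)
qed

lemma L_notboth: assumes "is_dns V E S" "\<not> (v \<in> set S \<and> v' \<in> set S)"
  shows "\<exists>T. is_dns V' E T \<and> length T = length S"
proof (cases "v' \<in> set S")
  case False then show ?thesis using L2 assms by blast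
next
  case True
  then have nv: "v \<notin> set S" using assms by auto
  have SV: "set S \<subseteq> V" using assms by (auto simp: is_dns_def)
  have inj: "inj_on hh (set S)" using nv unfolding inj_on_def hh_def by auto
  have "is_dns V E (map hh S)"
  proof (rule embed_dns[where g=id, OF assms(1)])
    show "distinct (map hh S)" using inj assms(1) by (simp add: distinct_map is_dns_def)
    show "set (map hh S) \<subseteq> V" using SV hhV by auto
  qed (auto simp: F4)
  moreover have "v' \<notin> set (map hh S)" using hh_ne by (metis imageE set_map)
  ultimately show ?thesis using L2 by (metis length_map)
qed

end

context twin begin

lemma key_del:
  assumes S: "is_dns V E S" and p: "p < length S" "S!p = v" and q: "q < length S" "S!q = v'"
  shows "\<exists>S' k. is_dns V' E S' \<and> length S' = length S - 1 \<and> k < length S' \<and> S'!k = v \<and>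
     NS1 V' E S' k \<noteq> {} \<and> (\<forall>i<length S'. S'!i \<noteq> v \<longrightarrow> NS V' E S' i - NS1 V' E S' k \<noteq> {})"
proof -
  define a where "a = min p q"
  define b where "b = max p q"
  have pq: "p \<noteq> q" using p q ne by auto
  have ab: "a < b" "b < length S" using pq p q by (auto simp: a_def b_def)
  have Na: "N (S!a) = N v" and Nb: "N (S!b) = N v"
    using p q F2 by (auto simp: a_def b_def min_def max_def)
  have Sab: "S!a \<in> {v,v'}" "S!b \<in> {v,v'}" using p q by (auto simp: a_def b_def min_def max_def)
  have dS: "distinct S" and SV: "set S \<subseteq> V" using S by (auto simp: is_dns_def)
  define D where "D = take a S @ drop (Suc a) S"
  define g where "g j = (if j < a then j else Suc j)" for j
  define S' where "S' = map hh D"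
  define k where "k = b - 1"
  have lenD: "length D = length S - 1" using ab by (simp add: D_def)
  have Dnth: "D!j = S!(g j)" if "j < length D" for j
    using that ab unfolding D_def g_def by (auto simp: nth_append min_def)
  have lenS': "length S' = length S - 1" by (simp add: S'_def lenD)
  have S'nth: "S'!j = hh (S!(g j))" if "j < length S'" for j
    using that Dnth by (simp add: S'_def lenD)
  have gmono: "j < j' \<Longrightarrow> g j < g j'" for j j' by (simp add: g_def)
  have glt: "j < length S' \<Longrightarrow> g j < length S" for j using lenS' by (auto simp: g_def)
  have gna: "g j \<noteq> a" for j by (simp add: g_def)
  have k: "k < length S'" "g k = b" using ab lenS' by (auto simp: k_def g_def)
  have S'k: "S'!k = v" using S'nth[OF k(1)] k(2) Sab by (auto simp: hh_def)
  have NS'nth: "N (S'!j) = N (S!(g j))" if "j < length S'" for j using S'nth[OF that] F4 by simp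
  have S'V: "set S' \<subseteq> V'" using SV hhV by (auto simp: S'_def D_def dest: in_set_takeD in_set_dropD)
  have dS': "distinct S'"
    unfolding distinct_conv_nth
  proof (intro allI impI)
    fix i j assume ij: "i < length S'" "j < length S'" "i \<noteq> j"
    have gij: "g i \<noteq> g j" using ij(3) by (auto simp: g_def split: if_splits)
    then have ne1: "S!(g i) \<noteq> S!(g j)" using dS glt ij by (simp add: nth_eq_iff_index_eq)
    show "S'!i \<noteq> S'!j"
    proof
      assume "S'!i = S'!j"
      then have "hh (S!(g i)) = hh (S!(g j))" using S'nth ij by simp
      then have "{S!(g i), S!(g j)} = {v, v'}" using ne1 by (auto simp: hh_def split: if_splits)
      then have "{g i, g j} = {p, q}" using p q glt ij dS gij by (auto simp: nth_eq_iff_index_eq doubleton_eq_iff)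
      then show False using gna[of i] gna[of j] by (auto simp: a_def doubleton_eq_iff min_def split: if_splits)
    qed
  qed
  have dnsG: "is_dns V E S'"
    by (rule embed_dns[where g=g, OF S dS']) (use S'V gmono glt NS'nth in auto)
  have dns: "is_dns V' E S'" using L2[OF dnsG] S'V by auto
  obtain u where u: "u \<in> N (S!b)" "dom_count V E S b u \<le> 1" using S ab unfolding is_dns_def by blast
  have "hh u \<in> NS1 V' E S' k"
    unfolding NS1_iff
  proof (intro conjI allI impI)
    show "hh u \<in> N' (S'!k)" using u(1) Nb S'k F1 F5 hh_ne vV by auto
    fix j assume j: "j < k"
    show "hh u \<notin> N' (S'!j)"
    proof
      assume "hh u \<in> N' (S'!j)"
      moreover have "j < length S'" using j k by simp
      ultimately have "u \<in> N (S!(g j))" using F1 F5[of "S!(g j)" u] NS'nth[of j] SV glt[of j] by (auto simp: subset_iff)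
      moreover have "g j < b" using gmono[OF j] k by simp
      moreover have "u \<in> N (S!a)" using u Na Nb by simp
      ultimately have "2 \<le> dom_count V E S b u" using dc_ge2[of a b "g j" u V E S] ab gna by auto
      then show False using u by simp
    qed
  qed
  then have ne1: "NS1 V' E S' k \<noteq> {}" by auto
  have foot: "NS V' E S' i - NS1 V' E S' k \<noteq> {}" if i: "i < length S'" "S'!i \<noteq> v" for i
  proof -
    obtain w where w: "w \<in> N (S!(g i))" "dom_count V E S (g i) w \<le> 1"
      using S glt[OF i(1)] unfolding is_dns_def by blast
    have Sgi: "S!(g i) \<in> V" using SV glt[OF i(1)] by auto
    have "dom_count V' E S' i (hh w) \<le> dom_count V E S (g i) w"
    proof (rule dc_le)
      show "inj_on g {j. j < i \<and> hh w \<in> N' (S'!j)}" unfolding inj_on_def g_def by auto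
      fix j assume j: "j < i" "hh w \<in> N' (S'!j)"
      then have "j < length S'" using i by simp
      then show "g j < g i \<and> w \<in> N (S!(g j))"
      proof -
        have "S!(g j) \<in> V" using SV glt \<open>j < length S'\<close> by (auto simp: subset_iff)
        then show ?thesis using gmono[OF j(1)] j(2) F1 F5[of "S!(g j)" w] NS'nth[of j] \<open>j < length S'\<close> by auto
      qed
    qed
    then have inNS: "hh w \<in> NS V' E S' i"
      unfolding NS_iff using w F1 F5 hh_ne Sgi NS'nth[OF i(1)] by auto
    have ik: "i \<noteq> k" using i S'k by auto
    have "hh w \<notin> NS1 V' E S' k"
    proof
      assume H: "hh w \<in> NS1 V' E S' k"
      show False
      proof (cases "i < k")
        case True then show False using H inNS unfolding NS1_iff NS_iff by auto
      next
        case False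
        then have "b < g i" using ik k by (auto simp: g_def)
        moreover have "w \<in> N v" using H S'k F1 F5 vV unfolding NS1_iff by auto
        ultimately have "2 \<le> dom_count V E S (g i) w"
          using dc_ge2[of a "g i" b w V E S] ab Na Nb by auto
        then show False using w by simp
      qed
    qed
    then show ?thesis using inNS by auto
  qed
  show ?thesis using dns lenS' k S'k ne1 foot by blast
qed

end

context twin begin

lemma key_ins:
  assumes S': "is_dns V' E S'" and k: "k < length S'" "S'!k = v" and ne1: "NS1 V' E S' k \<noteq> {}"
    and foot: "\<forall>i<length S'. S'!i \<noteq> v \<longrightarrow> NS V' E S' i - NS1 V' E S' k \<noteq> {}"
  shows "\<exists>T. is_dns V E T \<and> length T = length S' + 1"
proof -
  define T where "T = take (Suc k) S' @ v' # drop (Suc k) S'"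
  have lenT: "length T = length S' + 1" using k by (simp add: T_def)
  have Tnth: "T!j = (if j \<le> k then S'!j else if j = Suc k then v' else S'!(j - 1))"
    if "j < length T" for j
    using that k lenT
    apply (auto simp: T_def nth_append min_def nth_Cons split: nat.splits)
    apply (rule arg_cong[where f="nth S'"])
    apply linarith
    done
  have dS': "distinct S'" and S'V: "set S' \<subseteq> V'" using S' by (auto simp: is_dns_def)
  have v'n: "v' \<notin> set S'" using S'V by auto
  have dT: "distinct T" unfolding T_def using dS' v'n
    by (auto simp: set_take_disj_set_drop_if_distinct dest: in_set_takeD in_set_dropD)
  have TV: "set T \<subseteq> V" using S'V v'V by (auto simp: T_def dest: in_set_takeD in_set_dropD)
  have S'V2: "j < length S' \<Longrightarrow> S'!j \<in> V'" for j using S'V by (auto simp: subset_iff)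
  have "is_dns V E T"
    unfolding is_dns_def
  proof (intro conjI dT TV allI impI)
    fix i assume i: "i < length T"
    consider "i \<le> k" | "i = Suc k" | "Suc k < i" by linarith
    then show "\<exists>u\<in>N (T!i). dom_count V E T i u \<le> 1"
    proof cases
      case 1
      then have i': "i < length S'" using k by simp
      obtain u where u: "u \<in> N' (S'!i)" "dom_count V' E S' i u \<le> 1" using S' i' unfolding is_dns_def by blast
      have "dom_count V E T i u \<le> dom_count V' E S' i u"
      proof (rule dc_le[where g=id])
        fix j assume j: "j < i" "u \<in> N (T!j)"
        then have "T!j = S'!j" using Tnth[of j] 1 i by auto
        then show "id j < i \<and> u \<in> N' (S'!id j)" using j u F1 by auto
      qed auto
      moreover have "u \<in> N (T!i)" using u F1 Tnth[OF i] 1 by auto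
      ultimately show ?thesis using u by (metis order.trans)
    next
      case 2
      obtain u where u: "u \<in> NS1 V' E S' k" using ne1 by auto
      have Ti: "T!i = v'" using Tnth[OF i] 2 by simp
      have "dom_count V E T i u \<le> card {k}"
        unfolding dom_count_def
      proof (rule card_mono)
        show "{j. j < i \<and> u \<in> N (T!j)} \<subseteq> {k}"
        proof
          fix j assume j: "j \<in> {j. j < i \<and> u \<in> N (T!j)}"
          show "j \<in> {k}"
          proof (rule ccontr)
            assume "j \<notin> {k}"
            then have "j < k" using j 2 by auto
            moreover have "j < length T" using \<open>j < k\<close> k(1) lenT by simp
            ultimately have "T!j = S'!j" using Tnth[of j] by simp
            then show False using j u F1 \<open>j < k\<close> unfolding NS1_iff by auto
          qed
        qed
      qed auto
      moreover have "u \<in> N (T!i)" using u Ti F1 F2 k unfolding NS1_iff by auto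
      ultimately show ?thesis by auto
    next
      case 3
      have i1: "i - 1 < length S'" using i lenT 3 by simp
      have Ti: "T!i = S'!(i-1)" using Tnth[OF i] 3 by simp
      have "S'!(i-1) \<noteq> v"
      proof
        assume "S'!(i-1) = v"
        then have "i - 1 = k" using nth_eq_iff_index_eq[OF dS' i1 k(1)] k(2) by simp
        then show False using 3 by simp
      qed
      then obtain w where w: "w \<in> NS V' E S' (i-1)" "w \<notin> NS1 V' E S' k" using foot i1 by blast
      have w1: "w \<in> N' (S'!(i-1))" "dom_count V' E S' (i-1) w \<le> 1" using w(1) unfolding NS_iff by auto
      have wnv: "w \<notin> N v"
      proof
        assume wv: "w \<in> N v"
        then have "w \<in> N' (S'!k)" using w1 F1 k by auto
        then obtain j where j: "j < k" "w \<in> N' (S'!j)" using w(2) unfolding NS1_iff by auto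
        have "2 \<le> dom_count V' E S' (i-1) w"
          by (rule dc_ge2[of j "i-1" k]) (use j 3 \<open>w \<in> N' (S'!k)\<close> in auto)
        then show False using w1 by simp
      qed
      have "dom_count V E T i w \<le> dom_count V' E S' (i-1) w"
      proof (rule dc_le[where g="\<lambda>j. if j \<le> k then j else j - 1"])
        show "inj_on (\<lambda>j. if j \<le> k then j else j - 1) {j. j < i \<and> w \<in> N (T!j)}"
        proof (rule inj_onI)
          fix x y assume x: "x \<in> {j. j < i \<and> w \<in> N (T!j)}" and y: "y \<in> {j. j < i \<and> w \<in> N (T!j)}"
            and e: "(if x \<le> k then x else x - 1) = (if y \<le> k then y else y - 1)"
          have "x \<noteq> Suc k" using x Tnth[of x] i wnv F2 by auto
          moreover have "y \<noteq> Suc k" using y Tnth[of y] i wnv F2 by auto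
          ultimately show "x = y" using e by (auto split: if_splits)
        qed
      next
        fix j assume j: "j < i" "w \<in> N (T!j)"
        have "j \<noteq> Suc k" using j Tnth[of j] i wnv F2 by auto
        then have "T!j = S'!(if j \<le> k then j else j - 1)" using Tnth[of j] j i by auto
        then show "(if j \<le> k then j else j - 1) < i - 1 \<and> w \<in> N' (S'!(if j \<le> k then j else j - 1))"
          using j 3 w1 F1 \<open>j \<noteq> Suc k\<close> by auto
      qed
      moreover have "w \<in> N (T!i)" using w1 Ti F1 by auto
      ultimately show ?thesis using w1 by (metis order.trans)
    qed
  qed
  then show ?thesis using lenT by blast
qed

end


theorem proposition5:
  fixes V :: "'a set" and E :: "'a \<Rightarrow> 'a \<Rightarrow> bool" and v v' :: 'a
  assumes "simple_graph V E"
    and "true_twins V E v v'"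
    and "v \<noteq> v'"
  shows "gamma_gr2 (V - {v'}) E \<le> gamma_gr2 V E
       \<and> gamma_gr2 V E \<le> gamma_gr2 (V - {v'}) E + 1
       \<and> (gamma_gr2 V E = gamma_gr2 (V - {v'}) E + 1 \<longleftrightarrow>
          (\<exists>S'. is_mdns (V - {v'}) E S' \<and>
            (\<exists>k < length S'. S' ! k = v \<and> NS1 (V - {v'}) E S' k \<noteq> {} \<and>
               (\<forall>i < length S'. S' ! i \<noteq> v \<longrightarrow>
                  NS (V - {v'}) E S' i - NS1 (V - {v'}) E S' k \<noteq> {}))))"
proof -
  interpret twin V E v v' using assms by unfold_locales
  have fV: "finite V" by (rule finV)
  have fV': "finite (V - {v'})" by (rule finV')
  have up: "length S \<le> gamma_gr2 (V - {v'}) E + 1" if S: "is_dns V E S" for S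
  proof (cases "v \<in> set S \<and> v' \<in> set S")
    case True
    then obtain p q where "p < length S" "S!p = v" "q < length S" "S!q = v'"
      by (auto simp: in_set_conv_nth)
    from key_del[OF S this] obtain S' where "is_dns (V - {v'}) E S'" "length S' = length S - 1" by blast
    then show ?thesis using gamma_ge[OF fV'] by fastforce
  next
    case False
    from L_notboth[OF S False] obtain T where "is_dns (V - {v'}) E T" "length T = length S" by blast
    then show ?thesis using gamma_ge[OF fV'] by fastforce
  qed
  have c1: "gamma_gr2 (V - {v'}) E \<le> gamma_gr2 V E"
  proof -
    obtain S where "is_dns (V - {v'}) E S" "length S = gamma_gr2 (V - {v'}) E" using gamma_ex[OF fV'] by blast
    then show ?thesis using L1 gamma_ge[OF fV] by metis
  qed
  have c2: "gamma_gr2 V E \<le> gamma_gr2 (V - {v'}) E + 1"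
    using gamma_ex[OF fV] up by metis
  have c3: "gamma_gr2 V E = gamma_gr2 (V - {v'}) E + 1 \<longleftrightarrow>
          (\<exists>S'. is_mdns (V - {v'}) E S' \<and>
            (\<exists>k < length S'. S' ! k = v \<and> NS1 (V - {v'}) E S' k \<noteq> {} \<and>
               (\<forall>i < length S'. S' ! i \<noteq> v \<longrightarrow>
                  NS (V - {v'}) E S' i - NS1 (V - {v'}) E S' k \<noteq> {})))"
  proof
    assume eq: "gamma_gr2 V E = gamma_gr2 (V - {v'}) E + 1"
    obtain S where S: "is_dns V E S" "length S = gamma_gr2 V E" using gamma_ex[OF fV] by blast
    have both: "v \<in> set S \<and> v' \<in> set S"
    proof (rule ccontr)
      assume "\<not> (v \<in> set S \<and> v' \<in> set S)"
      from L_notboth[OF S(1) this] obtain T where "is_dns (V - {v'}) E T" "length T = length S" by blast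
      then show False using gamma_ge[OF fV'] S(2) eq by fastforce
    qed
    then obtain p q where "p < length S" "S!p = v" "q < length S" "S!q = v'"
      by (auto simp: in_set_conv_nth)
    from key_del[OF S(1) this] obtain S' k where S':
      "is_dns (V - {v'}) E S'" "length S' = length S - 1" "k < length S'" "S'!k = v"
      "NS1 (V - {v'}) E S' k \<noteq> {}"
      "\<forall>i<length S'. S'!i \<noteq> v \<longrightarrow> NS (V - {v'}) E S' i - NS1 (V - {v'}) E S' k \<noteq> {}"
      by blast
    have "is_mdns (V - {v'}) E S'"
      unfolding is_mdns_def using S' S eq gamma_ge[OF fV'] by auto
    then show "\<exists>S'. is_mdns (V - {v'}) E S' \<and>
            (\<exists>k < length S'. S' ! k = v \<and> NS1 (V - {v'}) E S' k \<noteq> {} \<and>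
               (\<forall>i < length S'. S' ! i \<noteq> v \<longrightarrow>
                  NS (V - {v'}) E S' i - NS1 (V - {v'}) E S' k \<noteq> {}))"
      using S' by blast
  next
    assume "\<exists>S'. is_mdns (V - {v'}) E S' \<and>
            (\<exists>k < length S'. S' ! k = v \<and> NS1 (V - {v'}) E S' k \<noteq> {} \<and>
               (\<forall>i < length S'. S' ! i \<noteq> v \<longrightarrow>
                  NS (V - {v'}) E S' i - NS1 (V - {v'}) E S' k \<noteq> {}))"
    then obtain S' k where S': "is_mdns (V - {v'}) E S'" "k < length S'" "S'!k = v"
      "NS1 (V - {v'}) E S' k \<noteq> {}"
      "\<forall>i<length S'. S'!i \<noteq> v \<longrightarrow> NS (V - {v'}) E S' i - NS1 (V - {v'}) E S' k \<noteq> {}"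
      by blast
    have g: "gamma_gr2 (V - {v'}) E = length S'" using mdns_gamma[OF fV' S'(1)] .
    have "is_dns (V - {v'}) E S'" using S'(1) by (simp add: is_mdns_def)
    from key_ins[OF this S'(2-5)] obtain T where "is_dns V E T" "length T = length S' + 1" by blast
    then have "length S' + 1 \<le> gamma_gr2 V E" using gamma_ge[OF fV] by metis
    then show "gamma_gr2 V E = gamma_gr2 (V - {v'}) E + 1" using c2 g by simp
  qed
  show ?thesis using c1 c2 c3 by blast
qed

end
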